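(* Let $V\subseteq\mathcal{V}$ be a set of interpretations. There is an ADF $D$ with $\mathrm{prf}(D)=V$ iff there is an adm-characterization for some $V'\subseteq\mathcal{V}$ with $V\subseteq V'$ and $\max_{\leq_i}(V')=V$, where $\max_{\leq_i}(V')$ denotes the set of $\leq_i$-maximal elements of $V'$.
   Context: Let $A$ be a fixed finite set of statements. An interpretation is a mapping $v:A\to\{\mathbf{t},\mathbf{f},\mathbf{u}\}$; $\mathcal{V}$ is the set of all interpretations and $\mathcal{V}_2$ the set of two-valued ones. The information ordering is $\mathbf{u}<_i\mathbf{t}$, $\mathbf{u}<_i\mathbf{f}$, extended pointwise. For $v\in\mathcal{V}$, $[v]_2$ is the set of two-valued interpretations $w$ with $v\leq_i w$. An ADF is $D=(A,L,C)$ where each statement $a$ has an acceptance formula $\varphi_a$ over its parents. The operator $\Gamma_D$ maps $v$ to the interpretation assigning to each $a$ the greatest lower bound w.r.t. $\leq_i$ (consensus: $\mathbf{t}$ if all are $\mathbf{t}$, $\mathbf{f}$ if all are $\mathbf{f}$, otherwise $\mathbf{u}$) of $\{w(\varphi_a)\mid w\in[v]_2\}$. $v$ is admissible iff $v\leq_i\Gamma_D(v)$; preferred iff it is $\leq_i$-maximal admissible; $\mathrm{prf}(D)$ is the set of preferred interpretations. A function $f:\mathcal{V}_2\to\mathcal{V}_2$ is an adm-characterization of a set $V'$ iff for each $v\in\mathcal{V}$: $v\in V'$ iff for every $a\in A$, $v(a)\neq\mathbf{u}$ implies $f(v_2)(a)=v(a)$ for all $v_2\in[v]_2$. (It is known that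 a set is the admissible semantics of some ADF iff it has an adm-characterization.) *)

theory Defs
  imports Main
begin

(* Statements: a finite type 'a (the fixed finite set A is UNIV). *)

datatype tv = Tt | Ff | Uu

type_synonym 'a interp = "'a \<Rightarrow> tv"

definition two_valued :: "'a interp set" where
  "two_valued = {v. \<forall>a. v a \<noteq> Uu}"

definition info_le :: "'a interp \<Rightarrow> 'a interp \<Rightarrow> bool" where
  "info_le v w \<longleftrightarrow> (\<forall>a. v a = Uu \<or> v a = w a)"

definition completions :: "'a interp \<Rightarrow> 'a interp set" where
  "completions v = {w \<in> two_valued. info_le v w}"

datatype 'a form = Atom 'a | Top | Bot | Neg "'a form"
  | Conj "'a form" "'a form" | Disj "'a form" "'a form"
  | Impl "'a form" "'a form" | Equiv "'a form" "'a form"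

fun atoms :: "'a form \<Rightarrow> 'a set" where
  "atoms (Atom a) = {a}"
| "atoms Top = {}"
| "atoms Bot = {}"
| "atoms (Neg p) = atoms p"
| "atoms (Conj p q) = atoms p \<union> atoms q"
| "atoms (Disj p q) = atoms p \<union> atoms q"
| "atoms (Impl p q) = atoms p \<union> atoms q"
| "atoms (Equiv p q) = atoms p \<union> atoms q"

fun holds :: "'a interp \<Rightarrow> 'a form \<Rightarrow> bool" where
  "holds w (Atom a) = (w a = Tt)"
| "holds w Top = True"
| "holds w Bot = False"
| "holds w (Neg p) = (\<not> holds w p)"
| "holds w (Conj p q) = (holds w p \<and> holds w q)"
| "holds w (Disj p q) = (holds w p \<or> holds w q)"
| "holds w (Impl p q) = (holds w p \<longrightarrow> holds w q)"
| "holds w (Equiv p q) = (holds w p \<longleftrightarrow> holds w q)"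

(* ADF D = (A, L, C): links L and acceptance formulas over parents *)
type_synonym 'a adf = "('a \<times> 'a) set \<times> ('a \<Rightarrow> 'a form)"

definition is_adf :: "'a adf \<Rightarrow> bool" where
  "is_adf D \<longleftrightarrow> (\<forall>a. atoms (snd D a) \<subseteq> {b. (b, a) \<in> fst D})"

(* consensus (glb w.r.t. info ordering) of a set of truth values from {t,f} *)
definition consensus :: "bool set \<Rightarrow> tv" where
  "consensus S = (if S \<subseteq> {True} then Tt else if S \<subseteq> {False} then Ff else Uu)"

definition Gamma :: "'a adf \<Rightarrow> 'a interp \<Rightarrow> 'a interp" where
  "Gamma D v = (\<lambda>a. consensus {holds w (snd D a) | w. w \<in> completions v})"

definition admissible :: "'a adf \<Rightarrow> 'a interp \<Rightarrow> bool" where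
  "admissible D v \<longleftrightarrow> info_le v (Gamma D v)"

definition info_maximal :: "'a interp set \<Rightarrow> 'a interp set" where
  "info_maximal V' = {v \<in> V'. \<forall>w \<in> V'. info_le v w \<longrightarrow> w = v}"

definition preferred :: "'a adf \<Rightarrow> 'a interp set" where
  "preferred D = info_maximal {v. admissible D v}"

definition adm_characterization :: "('a interp \<Rightarrow> 'a interp) \<Rightarrow> 'a interp set \<Rightarrow> bool" where
  "adm_characterization f V' \<longleftrightarrow>
     (\<forall>v2 \<in> two_valued. f v2 \<in> two_valued) \<and>
     (\<forall>v. v \<in> V' \<longleftrightarrow>
        (\<forall>a. v a \<noteq> Uu \<longrightarrow> (\<forall>v2 \<in> completions v. f v2 a = v a)))"

end

theory Submission
  imports Defs
begin

lemma completions_nonempty: "(\<lambda>a. if v a = Uu then Tt else v a) \<in> completions v"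
  by (auto simp: completions_def two_valued_def info_le_def)

lemma adm_iff:
  "admissible D v \<longleftrightarrow>
   (\<forall>a. v a \<noteq> Uu \<longrightarrow> (\<forall>w\<in>completions v. (if holds w (snd D a) then Tt else Ff) = v a))"
proof -
  have ne: "\<exists>w. w \<in> completions v" using completions_nonempty by blast
  have "info_le v (Gamma D v) \<longleftrightarrow>
     (\<forall>a. v a \<noteq> Uu \<longrightarrow> (\<forall>w\<in>completions v. (if holds w (snd D a) then Tt else Ff) = v a))"
  proof (intro iffI allI impI)
    fix a assume h: "info_le v (Gamma D v)" "v a \<noteq> Uu"
    then have e: "v a = consensus {holds w (snd D a) | w. w \<in> completions v}"
      by (auto simp: info_le_def Gamma_def)
    show "\<forall>w\<in>completions v. (if holds w (snd D a) then Tt else Ff) = v a"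
    proof (cases "v a")
      case Tt
      then have "{holds w (snd D a) | w. w \<in> completions v} \<subseteq> {True}"
        using e by (simp add: consensus_def split: if_splits)
      then have "\<forall>w\<in>completions v. holds w (snd D a)" by blast
      then show ?thesis using Tt by simp
    next
      case Ff
      then have "{holds w (snd D a) | w. w \<in> completions v} \<subseteq> {False}"
        using e by (simp add: consensus_def split: if_splits)
      then have "\<forall>w\<in>completions v. \<not> holds w (snd D a)" by blast
      then show ?thesis using Ff by simp
    next
      case Uu then show ?thesis using h by simp
    qed
  next
    assume h: "\<forall>a. v a \<noteq> Uu \<longrightarrow> (\<forall>w\<in>completions v. (if holds w (snd D a) then Tt else Ff) = v a)"
    show "info_le v (Gamma D v)"
      unfolding info_le_def
    proof
      fix a
      show "v a = Uu \<or> v a = Gamma D v a"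
      proof (cases "v a")
        case Tt
        have "\<forall>w\<in>completions v. holds w (snd D a)"
        proof
          fix w assume "w \<in> completions v"
          then have "(if holds w (snd D a) then Tt else Ff) = Tt" using h Tt by auto
          then show "holds w (snd D a)" by (simp split: if_splits)
        qed
        then show ?thesis using Tt by (auto simp: Gamma_def consensus_def)
      next
        case Ff
        have "\<forall>w\<in>completions v. \<not> holds w (snd D a)"
        proof
          fix w assume "w \<in> completions v"
          then have "(if holds w (snd D a) then Tt else Ff) = Ff" using h Ff by auto
          then show "\<not> holds w (snd D a)" by (simp split: if_splits)
        qed
        moreover obtain w0 where "w0 \<in> completions v" using ne by blast
        ultimately show ?thesis using Ff by (auto simp: Gamma_def consensus_def)
      next
        case Uu then show ?thesis by simp
      qed
    qed
  qed
  then show ?thesis by (simp add: admissible_def)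
qed

lemma shannon:
  assumes "finite S"
  shows "\<And>P. (\<forall>w w'. (\<forall>a\<in>S. w a = w' a) \<longrightarrow> P w = P w') \<Longrightarrow>
          \<exists>\<phi>. \<forall>w\<in>two_valued. holds w \<phi> = P w"
  using assms
proof (induction S rule: finite_induct)
  case empty
  then have c: "\<forall>w. P w = P (\<lambda>_. Tt)" by blast
  show ?case
  proof (cases "P (\<lambda>_. Tt)")
    case True then show ?thesis using c by (intro exI[of _ Top]) simp
  next
    case False then show ?thesis using c by (intro exI[of _ Bot]) simp
  qed
next
  case (insert x S)
  define P1 where "P1 w = P (w(x:=Tt))" for w
  define P2 where "P2 w = P (w(x:=Ff))" for w
  have d1: "\<forall>w w'. (\<forall>a\<in>S. w a = w' a) \<longrightarrow> P1 w = P1 w'"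
    unfolding P1_def
  proof (intro allI impI)
    fix w w' :: "'a interp" assume "\<forall>a\<in>S. w a = w' a"
    then have "\<forall>a\<in>insert x S. (w(x:=Tt)) a = (w'(x:=Tt)) a" by simp
    then show "P (w(x:=Tt)) = P (w'(x:=Tt))" using insert.prems by blast
  qed
  have d2: "\<forall>w w'. (\<forall>a\<in>S. w a = w' a) \<longrightarrow> P2 w = P2 w'"
    unfolding P2_def
  proof (intro allI impI)
    fix w w' :: "'a interp" assume "\<forall>a\<in>S. w a = w' a"
    then have "\<forall>a\<in>insert x S. (w(x:=Ff)) a = (w'(x:=Ff)) a" by simp
    then show "P (w(x:=Ff)) = P (w'(x:=Ff))" using insert.prems by blast
  qed
  obtain \<phi>1 where p1: "\<forall>w\<in>two_valued. holds w \<phi>1 = P1 w" using insert.IH d1 by blast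
  obtain \<phi>2 where p2: "\<forall>w\<in>two_valued. holds w \<phi>2 = P2 w" using insert.IH d2 by blast
  have "\<forall>w\<in>two_valued. holds w (Disj (Conj (Atom x) \<phi>1) (Conj (Neg (Atom x)) \<phi>2)) = P w"
  proof
    fix w :: "'a interp" assume w: "w \<in> two_valued"
    show "holds w (Disj (Conj (Atom x) \<phi>1) (Conj (Neg (Atom x)) \<phi>2)) = P w"
    proof (cases "w x")
      case Tt
      then have "w(x:=Tt) = w" by auto
      then show ?thesis using Tt p1 w by (simp add: P1_def)
    next
      case Ff
      then have "w(x:=Ff) = w" by auto
      then show ?thesis using Ff p2 w by (simp add: P2_def)
    next
      case Uu then show ?thesis using w by (simp add: two_valued_def)
    qed
  qed
  then show ?case by blast
qed

lemma any_formula: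
  fixes P :: "('a::finite) interp \<Rightarrow> bool"
  shows "\<exists>\<phi>. \<forall>w\<in>two_valued. holds w \<phi> = P w"
proof (rule shannon[of UNIV P])
  show "\<forall>w w'. (\<forall>a\<in>UNIV. w a = w' a) \<longrightarrow> P w = P w'"
    by (simp add: fun_eq_iff[symmetric])
qed simp

theorem corollary1:
  fixes V :: "('a::finite) interp set"
  shows "(\<exists>D. is_adf D \<and> preferred D = V) \<longleftrightarrow>
         (\<exists>V' f. V \<subseteq> V' \<and> info_maximal V' = V \<and> adm_characterization f V')"
proof
  assume "\<exists>D. is_adf D \<and> preferred D = V"
  then obtain D where D: "preferred D = V" by blast
  define V' where "V' = {v. admissible D v}"
  define f where "f w = (\<lambda>a. if holds w (snd D a) then Tt else Ff)" for w :: "'a interp"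
  have "adm_characterization f V'"
    unfolding adm_characterization_def
  proof (intro conjI ballI allI)
    fix v2 :: "'a interp" show "f v2 \<in> two_valued" by (simp add: f_def two_valued_def)
  next
    fix v :: "'a interp"
    show "v \<in> V' \<longleftrightarrow> (\<forall>a. v a \<noteq> Uu \<longrightarrow> (\<forall>v2\<in>completions v. f v2 a = v a))"
      unfolding V'_def f_def using adm_iff[of D v] by simp
  qed
  moreover have "info_maximal V' = V" using D by (simp add: preferred_def V'_def)
  moreover have "V \<subseteq> V'" using calculation(2) by (auto simp: info_maximal_def)
  ultimately show "\<exists>V' f. V \<subseteq> V' \<and> info_maximal V' = V \<and> adm_characterization f V'" by blast
next
  assume "\<exists>V' f. V \<subseteq> V' \<and> info_maximal V' = V \<and> adm_characterization f V'"
  then obtain V' f where m: "info_maximal V' = V" and ac: "adm_characterization f V'" by blast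
  have "\<exists>\<Phi>. \<forall>a. \<forall>w\<in>two_valued. holds w (\<Phi> a) = (f w a = Tt)"
  proof (rule choice, rule allI)
    fix a show "\<exists>\<phi>. \<forall>w\<in>two_valued. holds w \<phi> = (f w a = Tt)" by (rule any_formula)
  qed
  then obtain \<Phi> where \<Phi>0: "\<forall>a. \<forall>w\<in>two_valued. holds w (\<Phi> a) = (f w a = Tt)" by blast
  have \<Phi>: "\<And>a w. w \<in> two_valued \<Longrightarrow> holds w (\<Phi> a) = (f w a = Tt)" using \<Phi>0 by blast
  define D :: "'a adf" where "D = (UNIV, \<Phi>)"
  have adf: "is_adf D" by (simp add: is_adf_def D_def)
  have tv: "\<And>w. w \<in> two_valued \<Longrightarrow> f w \<in> two_valued" using ac by (simp add: adm_characterization_def)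
  have eq: "\<And>w a. w \<in> two_valued \<Longrightarrow> (if holds w (snd D a) then Tt else Ff) = f w a"
  proof -
    fix w a assume w: "(w::'a interp) \<in> two_valued"
    have "f w a \<noteq> Uu" using tv[OF w] by (simp add: two_valued_def)
    then show "(if holds w (snd D a) then Tt else Ff) = f w a"
      using \<Phi>[OF w, of a] by (cases "f w a") (auto simp: D_def)
  qed
  have "\<And>v. admissible D v \<longleftrightarrow> v \<in> V'"
  proof -
    fix v :: "'a interp"
    have "admissible D v \<longleftrightarrow> (\<forall>a. v a \<noteq> Uu \<longrightarrow> (\<forall>w\<in>completions v. f w a = v a))"
      using adm_iff[of D v] eq by (simp add: completions_def)
    also have "\<dots> \<longleftrightarrow> v \<in> V'" using ac by (simp add: adm_characterization_def)
    finally show "admissible D v \<longleftrightarrow> v \<in> V'" .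
  qed
  then have "{v. admissible D v} = V'" by blast
  then have "preferred D = V" using m by (simp add: preferred_def)
  then show "\<exists>D. is_adf D \<and> preferred D = V" using adf by blast
qed

end
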